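(* Let $s\ge0$, and let $Y\in\{-1,+1\}$ and $\lambda_{C_1},\dots,\lambda_{C_s}\in\{-1,0,+1\}$ be jointly distributed random variables. Define $2\cdot3^s\times2\cdot3^s$ matrices recursively by $$A_0=\begin{bmatrix}1&1\\1&0\end{bmatrix},\quad B_0=\begin{bmatrix}0&0\\0&1\end{bmatrix},\quad D=\begin{bmatrix}1&1&1\\1&0&0\\0&1&0\end{bmatrix},\quad E=\begin{bmatrix}0&0&0\\0&0&1\\0&0&0\end{bmatrix},$$ $$A_s=D\otimes A_{s-1}+E\otimes B_{s-1},\qquad B_s=E\otimes A_{s-1}+D\otimes B_{s-1},$$ where $\otimes$ is the Kronecker product. Index vectors of length $2\cdot3^s$ by $k=t+2\sum_{i=1}^s d_i3^{i-1}$ with $t\in\{0,1\}$ and $d_i\in\{0,1,2\}$. Let $\mu_C$ be the vector whose entry $k$ is $P(Y=y,\lambda_{C_1}=b_1,\dots,\lambda_{C_s}=b_s)$ with $y=1$ if $t=0$, $y=-1$ if $t=1$, and $b_i=1,0,-1$ according as $d_i=0,1,2$. Let $r_C$ be the vector whose entry $k$ is $P\big(\prod_{z\in Z}z=1,\ z=0\ \forall z\in U\big)$, where $Z=\{Y: t=1\}\cup\{\lambda_{C_i}:d_i=1\}$ and $U=\{\lambda_{C_i}:d_i=2\}$ (an empty product equals $1$, so the entry with $Z=U=\emptyset$ equals $1$). Then $A_s\mu_C=r_C$.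
   Context: In the intended application $\lambda_{C_1},\dots,\lambda_{C_s}$ are the outputs of a clique of weak supervision sources (value $0$ meaning abstain) and $Y$ is the task they label; $\mu_C$ is the marginal distribution (label model parameter) of the clique. *)

theory Defs
  imports "HOL-Probability.Probability"
begin

text \<open>Matrices are represented as functions nat \<Rightarrow> nat \<Rightarrow> real (entries outside the
  intended range are 0); vectors as nat \<Rightarrow> real. Indices start at 0.\<close>

definition A0 :: "nat \<Rightarrow> nat \<Rightarrow> real" where
  "A0 i j = (if i < 2 \<and> j < 2 then [[1,1],[1,0]] ! i ! j else 0)"

definition B0 :: "nat \<Rightarrow> nat \<Rightarrow> real" where
  "B0 i j = (if i < 2 \<and> j < 2 then [[0,0],[0,1]] ! i ! j else 0)"

definition Dm :: "nat \<Rightarrow> nat \<Rightarrow> real" where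
  "Dm i j = (if i < 3 \<and> j < 3 then [[1,1,1],[1,0,0],[0,1,0]] ! i ! j else 0)"

definition Em :: "nat \<Rightarrow> nat \<Rightarrow> real" where
  "Em i j = (if i < 3 \<and> j < 3 then [[0,0,0],[0,0,1],[0,0,0]] ! i ! j else 0)"

definition kron :: "nat \<Rightarrow> (nat \<Rightarrow> nat \<Rightarrow> real) \<Rightarrow> (nat \<Rightarrow> nat \<Rightarrow> real) \<Rightarrow> nat \<Rightarrow> nat \<Rightarrow> real" where
  "kron n X Y i j = X (i div n) (j div n) * Y (i mod n) (j mod n)"

definition madd :: "(nat \<Rightarrow> nat \<Rightarrow> real) \<Rightarrow> (nat \<Rightarrow> nat \<Rightarrow> real) \<Rightarrow> nat \<Rightarrow> nat \<Rightarrow> real" where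
  "madd X Y i j = X i j + Y i j"

text \<open>AB s = (A_s, B_s), both of size 2*3^s.\<close>
fun AB :: "nat \<Rightarrow> (nat \<Rightarrow> nat \<Rightarrow> real) \<times> (nat \<Rightarrow> nat \<Rightarrow> real)" where
  "AB 0 = (A0, B0)"
| "AB (Suc s) = (let (A, B) = AB s; n = 2 * 3 ^ s in
      (madd (kron n Dm A) (kron n Em B), madd (kron n Em A) (kron n Dm B)))"

definition Amat :: "nat \<Rightarrow> nat \<Rightarrow> nat \<Rightarrow> real" where
  "Amat s = fst (AB s)"

text \<open>Digits of index k = t + 2 * (\<Sum>i=1..s. d_i 3^(i-1)).\<close>
definition tdig :: "nat \<Rightarrow> nat" where
  "tdig k = k mod 2"

definition ddig :: "nat \<Rightarrow> nat \<Rightarrow> nat" where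
  "ddig k i = ((k div 2) div 3 ^ (i - 1)) mod 3"

definition ydig :: "nat \<Rightarrow> int" where
  "ydig k = (if tdig k = 0 then 1 else -1)"

definition bdig :: "nat \<Rightarrow> nat \<Rightarrow> int" where
  "bdig k i = (if ddig k i = 0 then 1 else if ddig k i = 1 then 0 else -1)"

definition mu_vec :: "'a pmf \<Rightarrow> ('a \<Rightarrow> int) \<Rightarrow> (nat \<Rightarrow> 'a \<Rightarrow> int) \<Rightarrow> nat \<Rightarrow> nat \<Rightarrow> real" where
  "mu_vec p Y lam s k = measure_pmf.prob p
     {\<omega>. Y \<omega> = ydig k \<and> (\<forall>i\<in>{1..s}. lam i \<omega> = bdig k i)}"

definition r_vec :: "'a pmf \<Rightarrow> ('a \<Rightarrow> int) \<Rightarrow> (nat \<Rightarrow> 'a \<Rightarrow> int) \<Rightarrow> nat \<Rightarrow> nat \<Rightarrow> real" where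
  "r_vec p Y lam s k = measure_pmf.prob p
     {\<omega>. (if tdig k = 1 then Y \<omega> else 1) * (\<Prod>i\<in>{i\<in>{1..s}. ddig k i = 1}. lam i \<omega>) = 1
          \<and> (\<forall>i\<in>{1..s}. ddig k i = 2 \<longrightarrow> lam i \<omega> = 0)}"

end

theory Submission
  imports Defs
begin

lemma prob_split:
  "measure_pmf.prob p A = measure_pmf.prob p {\<omega>\<in>A. Q \<omega>} + measure_pmf.prob p {\<omega>\<in>A. \<not> Q \<omega>}"
proof -
  have "A = {\<omega>\<in>A. Q \<omega>} \<union> {\<omega>\<in>A. \<not> Q \<omega>}" by auto
  then have "measure_pmf.prob p A = measure_pmf.prob p ({\<omega>\<in>A. Q \<omega>} \<union> {\<omega>\<in>A. \<not> Q \<omega>})" by simp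
  also have "\<dots> = measure_pmf.prob p {\<omega>\<in>A. Q \<omega>} + measure_pmf.prob p {\<omega>\<in>A. \<not> Q \<omega>}"
    by (rule measure_pmf.finite_measure_Union) auto
  finally show ?thesis .
qed

lemma sum3: "(\<Sum>j<3*n. (f::nat\<Rightarrow>real) j) = (\<Sum>e<3. \<Sum>j<n. f (j + n*e))"
proof -
  have "(\<Sum>j<3*n. f j) = (\<Sum>e<3. sum f {e*n..<e*n+n})"
    using sum.nat_group[of f n 3] by (simp add: mult.commute)
  also have "\<dots> = (\<Sum>e<3. \<Sum>j<n. f (j + n*e))"
  proof (rule sum.cong[OF refl])
    fix e show "sum f {e*n..<e*n+n} = (\<Sum>j<n. f (j + n*e))"
      using sum.shift_bounds_nat_ivl[of f 0 "e*n" n] by (simp add: lessThan_atLeast0 mult.commute add.commute)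
  qed
  finally show ?thesis .
qed

lemma digs:
  assumes "j < 2*3^s" "e < (3::nat)"
  shows "tdig (j + 2*3^s*e) = tdig j"
    and "i \<in> {1..s} \<Longrightarrow> ddig (j + 2*3^s*e) i = ddig j i"
    and "ddig (j + 2*3^s*e) (Suc s) = e"
proof -
  show "tdig (j + 2*3^s*e) = tdig j" unfolding tdig_def by (simp add: mult.assoc)
  have h: "(j + 2*3^s*e) div 2 = j div 2 + 3^s*e" by simp
  have jd: "j div 2 < 3^s" using assms by linarith
  show "ddig (j + 2*3^s*e) (Suc s) = e" unfolding ddig_def h using jd assms by simp
  assume i: "i \<in> {1..s}"
  define q where "q = i - 1"
  have qs: "q < s" using i q_def by auto
  have "(3::nat)^s = 3^q * (3 * 3^(s - q - 1))"
    using qs by (simp flip: power_add power_Suc)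
  then have "(j div 2 + 3^s*e) div 3^q = j div 2 div 3^q + 3 * (3^(s-q-1)*e)"
    by (simp add: mult.assoc)
  then show "ddig (j + 2*3^s*e) i = ddig j i"
    unfolding ddig_def h q_def[symmetric] by simp
qed

lemma kron_ent:
  assumes "k < n" "j < n"
  shows "kron n X Z (k + n*d) (j + n*e) = X d e * Z k j"
  using assms unfolding kron_def by simp


definition muS :: "'a pmf \<Rightarrow> ('a \<Rightarrow> int) \<Rightarrow> (nat \<Rightarrow> 'a \<Rightarrow> int) \<Rightarrow> nat \<Rightarrow> 'a set \<Rightarrow> nat \<Rightarrow> real" where
  "muS p Y lam s S k = measure_pmf.prob p {\<omega>\<in>S. Y \<omega> = ydig k \<and> (\<forall>i\<in>{1..s}. lam i \<omega> = bdig k i)}"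

definition prodv :: "('a \<Rightarrow> int) \<Rightarrow> (nat \<Rightarrow> 'a \<Rightarrow> int) \<Rightarrow> nat \<Rightarrow> nat \<Rightarrow> 'a \<Rightarrow> int" where
  "prodv Y lam s k \<omega> = (if tdig k = 1 then Y \<omega> else 1) * (\<Prod>i\<in>{i\<in>{1..s}. ddig k i = 1}. lam i \<omega>)"

definition zer :: "(nat \<Rightarrow> 'a \<Rightarrow> int) \<Rightarrow> nat \<Rightarrow> nat \<Rightarrow> 'a \<Rightarrow> bool" where
  "zer lam s k \<omega> = (\<forall>i\<in>{1..s}. ddig k i = 2 \<longrightarrow> lam i \<omega> = 0)"

definition rS :: "'a pmf \<Rightarrow> ('a \<Rightarrow> int) \<Rightarrow> (nat \<Rightarrow> 'a \<Rightarrow> int) \<Rightarrow> nat \<Rightarrow> 'a set \<Rightarrow> int \<Rightarrow> nat \<Rightarrow> real" where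
  "rS p Y lam s S v k = measure_pmf.prob p {\<omega>\<in>S. prodv Y lam s k \<omega> = v \<and> zer lam s k \<omega>}"

definition bv :: "nat \<Rightarrow> int" where
  "bv e = (if e = 0 then 1 else if e = 1 then 0 else -1)"

lemma mu_step:
  assumes "j < 2*3^s" "e < 3"
  shows "muS p Y lam (Suc s) S (j + 2*3^s*e) = muS p Y lam s {\<omega>\<in>S. lam (Suc s) \<omega> = bv e} j"
proof -
  have y: "ydig (j + 2*3^s*e) = ydig j" unfolding ydig_def using digs(1)[OF assms] by simp
  have b: "\<And>i. i \<in> {1..s} \<Longrightarrow> bdig (j + 2*3^s*e) i = bdig j i"
    unfolding bdig_def using digs(2)[OF assms] by simp
  have bs: "bdig (j + 2*3^s*e) (Suc s) = bv e"
    unfolding bdig_def bv_def using digs(3)[OF assms] by simp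
  have iv: "{1..Suc s} = insert (Suc s) {1..s}" by auto
  show ?thesis unfolding muS_def iv ball_simps(7)
    by (rule arg_cong[where f="measure_pmf.prob p"]) (auto simp: y b bs)
qed

lemma prodv_step:
  assumes "k < 2*3^s" "d < 3"
  shows "prodv Y lam (Suc s) (k + 2*3^s*d) \<omega> = prodv Y lam s k \<omega> * (if d = 1 then lam (Suc s) \<omega> else 1)"
proof -
  have iv: "{1..Suc s} = insert (Suc s) {1..s}" by auto
  have setq: "{i\<in>{1..Suc s}. ddig (k + 2*3^s*d) i = 1} =
     (if d = 1 then insert (Suc s) {i\<in>{1..s}. ddig k i = 1} else {i\<in>{1..s}. ddig k i = 1})"
    using digs(2)[OF assms] digs(3)[OF assms] unfolding iv by auto
  show ?thesis unfolding prodv_def setq digs(1)[OF assms]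
    by (simp add: mult_ac)
qed

lemma zer_step:
  assumes "k < 2*3^s" "d < 3"
  shows "zer lam (Suc s) (k + 2*3^s*d) \<omega> = (zer lam s k \<omega> \<and> (d = 2 \<longrightarrow> lam (Suc s) \<omega> = 0))"
proof -
  have iv: "{1..Suc s} = insert (Suc s) {1..s}" by auto
  show ?thesis unfolding zer_def iv using digs(2)[OF assms] digs(3)[OF assms] by auto
qed

lemma split3:
  assumes "\<forall>\<omega>. l \<omega> \<in> {-1, 0, 1::int}"
  shows "measure_pmf.prob p {\<omega>\<in>S. P \<omega>} =
    measure_pmf.prob p {\<omega>\<in>{\<omega>\<in>S. l \<omega> = 1}. P \<omega>} + measure_pmf.prob p {\<omega>\<in>{\<omega>\<in>S. l \<omega> = 0}. P \<omega>}
    + measure_pmf.prob p {\<omega>\<in>{\<omega>\<in>S. l \<omega> = -1}. P \<omega>}"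
proof -
  have "measure_pmf.prob p {\<omega>\<in>S. P \<omega>} = measure_pmf.prob p {\<omega>\<in>{\<omega>\<in>S. P \<omega>}. l \<omega> = 1}
     + measure_pmf.prob p {\<omega>\<in>{\<omega>\<in>S. P \<omega>}. \<not> l \<omega> = 1}" by (rule prob_split)
  also have "measure_pmf.prob p {\<omega>\<in>{\<omega>\<in>S. P \<omega>}. \<not> l \<omega> = 1} =
     measure_pmf.prob p {\<omega>\<in>{\<omega>\<in>{\<omega>\<in>S. P \<omega>}. \<not> l \<omega> = 1}. l \<omega> = 0}
     + measure_pmf.prob p {\<omega>\<in>{\<omega>\<in>{\<omega>\<in>S. P \<omega>}. \<not> l \<omega> = 1}. \<not> l \<omega> = 0}" by (rule prob_split)
  also have "{\<omega>\<in>{\<omega>\<in>{\<omega>\<in>S. P \<omega>}. \<not> l \<omega> = 1}. \<not> l \<omega> = 0} = {\<omega>\<in>{\<omega>\<in>S. l \<omega> = -1}. P \<omega>}"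
    using assms by auto
  also have "{\<omega>\<in>{\<omega>\<in>{\<omega>\<in>S. P \<omega>}. \<not> l \<omega> = 1}. l \<omega> = 0} = {\<omega>\<in>{\<omega>\<in>S. l \<omega> = 0}. P \<omega>}"
    by auto
  also have "{\<omega>\<in>{\<omega>\<in>S. P \<omega>}. l \<omega> = 1} = {\<omega>\<in>{\<omega>\<in>S. l \<omega> = 1}. P \<omega>}" by auto
  finally show ?thesis by simp
qed

lemma split_mult:
  assumes "v = 1 \<or> v = (-1::int)"
  shows "measure_pmf.prob p {\<omega>\<in>S. q \<omega> * l \<omega> = v \<and> z \<omega>} =
    measure_pmf.prob p {\<omega>\<in>{\<omega>\<in>S. l \<omega> = 1}. q \<omega> = v \<and> z \<omega>} +
    measure_pmf.prob p {\<omega>\<in>{\<omega>\<in>S. l \<omega> = -1}. q \<omega> = -v \<and> z \<omega>}"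
proof -
  have "measure_pmf.prob p {\<omega>\<in>S. q \<omega> * l \<omega> = v \<and> z \<omega>} =
     measure_pmf.prob p {\<omega>\<in>{\<omega>\<in>S. q \<omega> * l \<omega> = v \<and> z \<omega>}. l \<omega> = 1}
     + measure_pmf.prob p {\<omega>\<in>{\<omega>\<in>S. q \<omega> * l \<omega> = v \<and> z \<omega>}. \<not> l \<omega> = 1}" by (rule prob_split)
  also have "{\<omega>\<in>{\<omega>\<in>S. q \<omega> * l \<omega> = v \<and> z \<omega>}. l \<omega> = 1} = {\<omega>\<in>{\<omega>\<in>S. l \<omega> = 1}. q \<omega> = v \<and> z \<omega>}"
    by auto
  also have "{\<omega>\<in>{\<omega>\<in>S. q \<omega> * l \<omega> = v \<and> z \<omega>}. \<not> l \<omega> = 1} = {\<omega>\<in>{\<omega>\<in>S. l \<omega> = -1}. q \<omega> = -v \<and> z \<omega>}"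
    using assms by (auto simp: zmult_eq_1_iff zmult_eq_neg1_iff)
  finally show ?thesis .
qed


lemma main:
  assumes "\<forall>\<omega>. Y \<omega> \<in> {-1, 1}"
    and "\<forall>i\<in>{1..s}. \<forall>\<omega>. lam i \<omega> \<in> {-1, 0, 1}"
  shows "\<forall>S. \<forall>k < 2 * 3 ^ s.
     (\<Sum>j < 2 * 3 ^ s. fst (AB s) k j * muS p Y lam s S j) = rS p Y lam s S 1 k \<and>
     (\<Sum>j < 2 * 3 ^ s. snd (AB s) k j * muS p Y lam s S j) = rS p Y lam s S (-1) k"
  using assms(2)
proof (induction s)
  case 0
  show ?case
  proof (intro allI impI)
    fix S and k :: nat assume k: "k < 2 * 3 ^ 0"
    have u: "measure_pmf.prob p {\<omega>\<in>S. Y \<omega> = 1} + measure_pmf.prob p {\<omega>\<in>S. Y \<omega> = -1}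
       = measure_pmf.prob p S"
    proof -
      have "{\<omega>\<in>S. \<not> Y \<omega> = 1} = {\<omega>\<in>S. Y \<omega> = -1}" using assms(1) by auto
      then show ?thesis using prob_split[of p S "\<lambda>\<omega>. Y \<omega> = 1"] by simp
    qed
    have s2: "(\<Sum>j<2. f j) = f 0 + f 1" for f :: "nat \<Rightarrow> real" by (simp add: numeral_2_eq_2)
    have mu0: "muS p Y lam 0 S 0 = measure_pmf.prob p {\<omega>\<in>S. Y \<omega> = 1}"
      by (simp add: muS_def ydig_def tdig_def)
    have mu1: "muS p Y lam 0 S (Suc 0) = measure_pmf.prob p {\<omega>\<in>S. Y \<omega> = -1}"
      by (simp add: muS_def ydig_def tdig_def)
    have r0: "rS p Y lam 0 S v 0 = (if v = 1 then measure_pmf.prob p S else 0)" for v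
      by (simp add: rS_def prodv_def zer_def tdig_def)
    have r1: "rS p Y lam 0 S v 1 = measure_pmf.prob p {\<omega>\<in>S. Y \<omega> = v}" for v
      by (simp add: rS_def prodv_def zer_def tdig_def)
    have "k = 0 \<or> k = 1" using k by auto
    then show "(\<Sum>j < 2 * 3 ^ 0. fst (AB 0) k j * muS p Y lam 0 S j) = rS p Y lam 0 S 1 k \<and>
     (\<Sum>j < 2 * 3 ^ 0. snd (AB 0) k j * muS p Y lam 0 S j) = rS p Y lam 0 S (-1) k"
    proof
      assume k0: "k = 0"
      show ?thesis unfolding k0 r0 using u by (simp add: s2 mu0 mu1 A0_def B0_def numeral_2_eq_2)
    next
      assume k1: "k = 1"
      show ?thesis unfolding k1 r1 by (simp add: s2 mu0 mu1 A0_def B0_def)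
    qed
  qed
next
  case (Suc s)
  define n where "n = (2::nat) * 3 ^ s"
  define A where "A = fst (AB s)"
  define B where "B = snd (AB s)"
  have AB: "AB (Suc s) = (madd (kron n Dm A) (kron n Em B), madd (kron n Em A) (kron n Dm B))"
    by (simp add: A_def B_def n_def Let_def split: prod.split)
  have IH: "\<forall>S. \<forall>k < n.
     (\<Sum>j < n. A k j * muS p Y lam s S j) = rS p Y lam s S 1 k \<and>
     (\<Sum>j < n. B k j * muS p Y lam s S j) = rS p Y lam s S (-1) k"
    using Suc by (simp add: A_def B_def n_def)
  have lamS: "\<forall>\<omega>. lam (Suc s) \<omega> \<in> {-1, 0, 1}" using Suc.prems by auto
  show ?case
  proof (intro allI impI)
    fix S and k :: nat assume k: "k < 2 * 3 ^ Suc s"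
    define d where "d = k div n"
    define k' where "k' = k mod n"
    have n0: "n > 0" by (simp add: n_def)
    have kk: "k = k' + n * d" by (simp add: d_def k'_def)
    have k': "k' < n" using n0 by (simp add: k'_def)
    have k3: "k < 3 * n" using k by (simp add: n_def)
    have d: "d < 3" unfolding d_def using k3 by (simp add: less_mult_imp_div_less)
    have N: "2 * 3 ^ Suc s = 3 * n" by (simp add: n_def)
    define Se where "Se e = {\<omega>\<in>S. lam (Suc s) \<omega> = bv e}" for e
    have gen: "(\<Sum>j < 2 * 3 ^ Suc s. madd (kron n X1 A) (kron n X2 B) k j * muS p Y lam (Suc s) S j)
       = (\<Sum>e<3. X1 d e * rS p Y lam s (Se e) 1 k' + X2 d e * rS p Y lam s (Se e) (-1) k')" for X1 X2 :: "nat \<Rightarrow> nat \<Rightarrow> real"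
    proof -
      have "(\<Sum>j < 2 * 3 ^ Suc s. madd (kron n X1 A) (kron n X2 B) k j * muS p Y lam (Suc s) S j)
        = (\<Sum>e<3. \<Sum>j<n. madd (kron n X1 A) (kron n X2 B) k (j + n*e) * muS p Y lam (Suc s) S (j + n*e))"
        unfolding N by (rule sum3)
      also have "\<dots> = (\<Sum>e<3. \<Sum>j<n. (X1 d e * A k' j + X2 d e * B k' j) * muS p Y lam s (Se e) j)"
      proof (rule sum.cong[OF refl], rule sum.cong[OF refl])
        fix e j :: nat assume e: "e \<in> {..<3}" and j: "j \<in> {..<n}"
        show "madd (kron n X1 A) (kron n X2 B) k (j + n*e) * muS p Y lam (Suc s) S (j + n*e) =
          (X1 d e * A k' j + X2 d e * B k' j) * muS p Y lam s (Se e) j"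
        proof -
          have j2: "j < 2*3^s" using j by (simp add: n_def)
          have e3: "e < 3" using e by simp
          have m: "muS p Y lam (Suc s) S (j + n*e) = muS p Y lam s (Se e) j"
            using mu_step[OF j2 e3, of p Y lam S] unfolding Se_def n_def .
          have jn: "j < n" using j by simp
          have kr: "madd (kron n X1 A) (kron n X2 B) k (j + n*e) = X1 d e * A k' j + X2 d e * B k' j"
            unfolding madd_def kk kron_ent[OF k' jn] ..
          show ?thesis unfolding m kr ..
        qed
      qed
      also have "\<dots> = (\<Sum>e<3. X1 d e * (\<Sum>j<n. A k' j * muS p Y lam s (Se e) j) +
                                X2 d e * (\<Sum>j<n. B k' j * muS p Y lam s (Se e) j))"
        by (simp add: sum_distrib_left sum.distrib distrib_right mult.assoc)
      also have "\<dots> = (\<Sum>e<3. X1 d e * rS p Y lam s (Se e) 1 k' + X2 d e * rS p Y lam s (Se e) (-1) k')"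
        using IH k' by auto
      finally show ?thesis .
    qed
    have rstep: "rS p Y lam (Suc s) S v k = measure_pmf.prob p {\<omega>\<in>S.
        prodv Y lam s k' \<omega> * (if d = 1 then lam (Suc s) \<omega> else 1) = v \<and>
        (zer lam s k' \<omega> \<and> (d = 2 \<longrightarrow> lam (Suc s) \<omega> = 0))}" for v
    proof -
      have k2: "k' < 2*3^s" using k' by (simp add: n_def)
      have nn: "k' + n * d = k' + 2*3^s*d" by (simp add: n_def)
      show ?thesis unfolding rS_def kk nn prodv_step[OF k2 d] zer_step[OF k2 d] by simp
    qed
    have s3: "(\<Sum>e<3. f e) = f 0 + f 1 + f 2" for f :: "nat \<Rightarrow> real"
      by (simp add: numeral_3_eq_3 numeral_2_eq_2)
    have bv: "bv 0 = 1" "bv 1 = 0" "bv 2 = -1" by (simp_all add: bv_def)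
    have Dv: "Dm 0 0 = 1" "Dm 0 1 = 1" "Dm 0 2 = 1" "Dm 1 0 = 1" "Dm 1 1 = 0" "Dm 1 2 = 0"
      "Dm 2 0 = 0" "Dm 2 1 = 1" "Dm 2 2 = 0" by (simp_all add: Dm_def)
    have Ev: "Em 0 0 = 0" "Em 0 1 = 0" "Em 0 2 = 0" "Em 1 0 = 0" "Em 1 1 = 0" "Em 1 2 = 1"
      "Em 2 0 = 0" "Em 2 1 = 0" "Em 2 2 = 0" by (simp_all add: Em_def)
    let ?P = "\<lambda>v \<omega>. prodv Y lam s k' \<omega> = v \<and> zer lam s k' \<omega>"
    have Sv: "Se 0 = {\<omega>\<in>S. lam (Suc s) \<omega> = 1}" "Se 1 = {\<omega>\<in>S. lam (Suc s) \<omega> = 0}"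
      "Se 2 = {\<omega>\<in>S. lam (Suc s) \<omega> = -1}" by (simp_all add: Se_def bv_def)
    have rr: "rS p Y lam s (Se e) v k' = measure_pmf.prob p {\<omega>\<in>Se e. ?P v \<omega>}" for e v
      by (simp add: rS_def)
    have "d = 0 \<or> d = 1 \<or> d = 2" using d by auto
    then show "(\<Sum>j < 2 * 3 ^ Suc s. fst (AB (Suc s)) k j * muS p Y lam (Suc s) S j) = rS p Y lam (Suc s) S 1 k \<and>
     (\<Sum>j < 2 * 3 ^ Suc s. snd (AB (Suc s)) k j * muS p Y lam (Suc s) S j) = rS p Y lam (Suc s) S (-1) k"
    proof (elim disjE)
      assume d0: "d = 0"
      have L: "{\<omega>\<in>S. prodv Y lam s k' \<omega> * (if d = 1 then lam (Suc s) \<omega> else 1) = v \<and>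
        (zer lam s k' \<omega> \<and> (d = 2 \<longrightarrow> lam (Suc s) \<omega> = 0))} = {\<omega>\<in>S. ?P v \<omega>}" for v
        using d0 by simp
      show ?thesis unfolding AB fst_conv snd_conv gen rstep s3 L rr d0 Dv Ev Sv
        using split3[OF lamS, of p S "?P 1"] split3[OF lamS, of p S "?P (-1)"] by simp
    next
      assume d1: "d = 1"
      have L: "{\<omega>\<in>S. prodv Y lam s k' \<omega> * (if d = 1 then lam (Suc s) \<omega> else 1) = v \<and>
        (zer lam s k' \<omega> \<and> (d = 2 \<longrightarrow> lam (Suc s) \<omega> = 0))} =
        {\<omega>\<in>S. prodv Y lam s k' \<omega> * lam (Suc s) \<omega> = v \<and> zer lam s k' \<omega>}" for v
        using d1 by simp
      show ?thesis unfolding AB fst_conv snd_conv gen rstep s3 L rr d1 Dv Ev Sv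
        using split_mult[of 1 p S "prodv Y lam s k'" "lam (Suc s)" "zer lam s k'"]
          split_mult[of "-1" p S "prodv Y lam s k'" "lam (Suc s)" "zer lam s k'"] by simp
    next
      assume d2: "d = 2"
      have L: "{\<omega>\<in>S. prodv Y lam s k' \<omega> * (if d = 1 then lam (Suc s) \<omega> else 1) = v \<and>
        (zer lam s k' \<omega> \<and> (d = 2 \<longrightarrow> lam (Suc s) \<omega> = 0))} =
        {\<omega>\<in>{\<omega>\<in>S. lam (Suc s) \<omega> = 0}. ?P v \<omega>}" for v
        using d2 by auto
      show ?thesis unfolding AB fst_conv snd_conv gen rstep s3 L rr d2 Dv Ev Sv
        by (simp add: conj_ac)
    qed
  qed
qed

theorem lemma2:
  fixes p :: "'a pmf" and Y :: "'a \<Rightarrow> int" and lam :: "nat \<Rightarrow> 'a \<Rightarrow> int" and s :: nat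
  assumes "\<forall>\<omega>. Y \<omega> \<in> {-1, 1}"
    and "\<forall>i\<in>{1..s}. \<forall>\<omega>. lam i \<omega> \<in> {-1, 0, 1}"
  shows "\<forall>k < 2 * 3 ^ s.
           (\<Sum>j < 2 * 3 ^ s. Amat s k j * mu_vec p Y lam s j) = r_vec p Y lam s k"
proof (intro allI impI)
  fix k :: nat assume k: "k < 2 * 3 ^ s"
  have m: "mu_vec p Y lam s j = muS p Y lam s UNIV j" for j
    by (simp add: mu_vec_def muS_def)
  have r: "r_vec p Y lam s k = rS p Y lam s UNIV 1 k"
    by (simp add: r_vec_def rS_def prodv_def zer_def)
  show "(\<Sum>j < 2 * 3 ^ s. Amat s k j * mu_vec p Y lam s j) = r_vec p Y lam s k"
    unfolding m r Amat_def using main[OF assms, of p] k by blast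
qed

end
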